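(* Let $(M,\mathcal D,g)$ be a three-dimensional contact sub-Riemannian manifold and $S$ an embedded oriented surface with sub-Riemannian characteristic vector field $X$. For $\varepsilon>0$ let $b_\varepsilon=\sqrt{1-\mathrm{div}(X)^2(1-\varepsilon)}=\sqrt{1-(1-|X|^2)(1-\varepsilon)}$. Then on $S\setminus\Sigma(S)$ the Riemannian $\varepsilon$-coframe satisfies $$\theta_1^\varepsilon=\theta_1,\qquad \theta_2^\varepsilon=\frac{b_\varepsilon}{\sqrt\varepsilon}\theta_2.$$
   Context: $M$ a smooth 3-manifold, $\mathcal D=\ker\omega$ a co-oriented contact distribution, $g$ a smooth metric on $\mathcal D$, $\omega$ normalized so that $d\omega(f_1,f_2)=1$ for positively oriented $g$-orthonormal frames of $\mathcal D$; Reeb field $f_0$: $\omega(f_0)=1$, $d\omega(f_0,\cdot)=0$. For $\varepsilon>0$, $g^\varepsilon$ is the Riemannian metric with $g^\varepsilon|_{\mathcal D}=g$, $g^\varepsilon(\mathcal D,f_0)=0$, $g^\varepsilon(f_0,f_0)=1/\varepsilon$; $\sigma^\varepsilon$ is the area form of $(S,g^\varepsilon|_S)$, $|\cdot|_\varepsilon$ its norm and $J^\varepsilon$ its complex structure (rotation by $+\pi/2$). $\Sigma(S)=\{p\in S:T_pS=\mathcal D_p\}$. The characteristic vector field $X$ is defined by $\iota_X\sigma^1=\omega|_S$; $\mathrm{div}$ is the divergence w.r.t. $\sigma^1$ and $|X|=|X|_1$. The Riemannian $\varepsilon$-frame on $S\setminus\Sigma(S)$ is $e_1^\varepsilon=X/|X|_\varepsilon$,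 $e_2^\varepsilon=J^\varepsilon X/|X|_\varepsilon$, with dual coframe $\theta_1^\varepsilon,\theta_2^\varepsilon$ ($\theta_i^\varepsilon(e_j^\varepsilon)=\delta_{ij}$); $\theta_i:=\theta_i^1$. *)

theory Defs
  imports "HOL-Analysis.Analysis"
begin

text \<open>Pointwise model at a point p of S. The tangent space T_pM is identified with
 real^3 via the frame (f0, f1, f2): component 0 is the Reeb (f0) coordinate, components
 1, 2 are the coordinates w.r.t. a g-orthonormal frame (f1, f2) of D_p.
 The tangent plane T_pS is span {u, w}, oriented by the ordered basis (u, w).\<close>

definition omega :: "real^3 \<Rightarrow> real" where
  "omega v = v $ 0"

definition distr :: "(real^3) set" where
  "distr = {v. omega v = 0}"

text \<open>The metric g^eps: g on D, D orthogonal to f0, g^eps(f0,f0) = 1/eps.\<close>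
definition gmet :: "real \<Rightarrow> real^3 \<Rightarrow> real^3 \<Rightarrow> real" where
  "gmet \<epsilon> a b = a $ 1 * b $ 1 + a $ 2 * b $ 2 + a $ 0 * b $ 0 / \<epsilon>"

definition normg :: "real \<Rightarrow> real^3 \<Rightarrow> real" where
  "normg \<epsilon> a = sqrt (gmet \<epsilon> a a)"

definition coords :: "real^3 \<Rightarrow> real^3 \<Rightarrow> real^3 \<Rightarrow> real \<times> real" where
  "coords u w a = (THE (s, t). a = s *\<^sub>R u + t *\<^sub>R w)"

definition sigma :: "real \<Rightarrow> real^3 \<Rightarrow> real^3 \<Rightarrow> real^3 \<Rightarrow> real^3 \<Rightarrow> real" where
  "sigma \<epsilon> u w a b =
     (let (a1, a2) = coords u w a; (b1, b2) = coords u w b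
      in (a1 * b2 - a2 * b1) * sqrt (gmet \<epsilon> u u * gmet \<epsilon> w w - (gmet \<epsilon> u w)\<^sup>2))"

definition Jrot :: "real \<Rightarrow> real^3 \<Rightarrow> real^3 \<Rightarrow> real^3 \<Rightarrow> real^3" where
  "Jrot \<epsilon> u w a = (THE c. c \<in> span {u, w} \<and>
      (\<forall>b\<in>span {u, w}. gmet \<epsilon> c b = sigma \<epsilon> u w a b))"

definition charX :: "real^3 \<Rightarrow> real^3 \<Rightarrow> real^3" where
  "charX u w = (THE x. x \<in> span {u, w} \<and>
      (\<forall>b\<in>span {u, w}. sigma 1 u w x b = omega b))"

definition frame1 :: "real \<Rightarrow> real^3 \<Rightarrow> real^3 \<Rightarrow> real^3" where
  "frame1 \<epsilon> u w = (1 / normg \<epsilon> (charX u w)) *\<^sub>R charX u w"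

definition frame2 :: "real \<Rightarrow> real^3 \<Rightarrow> real^3 \<Rightarrow> real^3" where
  "frame2 \<epsilon> u w = (1 / normg \<epsilon> (charX u w)) *\<^sub>R Jrot \<epsilon> u w (charX u w)"

definition coframe :: "real \<Rightarrow> real^3 \<Rightarrow> real^3 \<Rightarrow> real^3 \<Rightarrow> real \<times> real" where
  "coframe \<epsilon> u w v = coords (frame1 \<epsilon> u w) (frame2 \<epsilon> u w) v"

end

theory Submission imports Defs begin

lemma vec3_eq: "(x::real^3) = y \<longleftrightarrow> x$0 = y$0 \<and> x$1 = y$1 \<and> x$2 = y$2"
proof -
  have "\<And>i::3. i = 0 \<or> i = 1 \<or> i = 2"
  proof -
    fix i :: 3
    have "i = 1 \<or> i = 2 \<or> i = 3" by (rule exhaust_3)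
    moreover have "(3::3) = 0" by simp
    ultimately show "i = 0 \<or> i = 1 \<or> i = 2" by auto
  qed
  note h = this
  show ?thesis unfolding vec_eq_iff
  proof safe
    fix i :: 3 assume "x$0 = y$0" "x$1 = y$1" "x$2 = y$2"
    then show "x$i = y$i" using h[of i] by auto
  qed auto
qed

lemma span2: "v \<in> span {u, w} \<longleftrightarrow> (\<exists>s t. v = s *\<^sub>R u + t *\<^sub>R (w::real^3))"
  apply (auto simp add: span_insert span_singleton)
  apply (metis add.commute diff_add_cancel)
  apply (rule_tac x=s in exI, rule_tac x=t in exI, simp)
  done

definition li2 :: "real^3 \<Rightarrow> real^3 \<Rightarrow> bool" where
  "li2 p q \<longleftrightarrow> (\<forall>x y. x *\<^sub>R p + y *\<^sub>R q = 0 \<longrightarrow> x = 0 \<and> y = 0)"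

lemma li2_of_indep:
  assumes "independent {u, w}" "u \<noteq> w" shows "li2 u w"
  unfolding li2_def
proof (intro allI impI)
  fix x y assume h: "x *\<^sub>R u + y *\<^sub>R w = 0"
  show "x = 0 \<and> y = 0"
  proof (intro conjI; rule ccontr)
      assume "x \<noteq> 0"
      have "x *\<^sub>R u = - (y *\<^sub>R w)" using h by (simp add: eq_neg_iff_add_eq_0)
      then have "inverse x *\<^sub>R (x *\<^sub>R u) = inverse x *\<^sub>R (- (y *\<^sub>R w))" by simp
      then have "u = (- y / x) *\<^sub>R w" using \<open>x \<noteq> 0\<close> by (simp add: divide_inverse mult.commute)
      then have "u \<in> span {w}" unfolding span_singleton by blast
      moreover have "{u,w} - {u} = {w}" using assms(2) by auto
      ultimately have "u \<in> span ({u,w} - {u})" by simp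
      then show False using assms(1) unfolding dependent_def by blast
    next
      assume "y \<noteq> 0"
      have "y *\<^sub>R w = - (x *\<^sub>R u)" using h by (simp add: eq_neg_iff_add_eq_0 add.commute)
      then have "inverse y *\<^sub>R (y *\<^sub>R w) = inverse y *\<^sub>R (- (x *\<^sub>R u))" by simp
      then have "w = (- x / y) *\<^sub>R u" using \<open>y \<noteq> 0\<close> by (simp add: divide_inverse mult.commute)
      then have "w \<in> span {u}" unfolding span_singleton by blast
      moreover have "{u,w} - {w} = {u}" using assms(2) by auto
      ultimately have "w \<in> span ({u,w} - {w})" by simp
      then show False using assms(1) unfolding dependent_def by blast
  qed
qed

lemma coords_eq:
  assumes "li2 p q" "a = s *\<^sub>R p + t *\<^sub>R q" shows "coords p q a = (s, t)"
  unfolding coords_def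
proof (rule the1_equality)
  show "\<exists>!x. case x of (s, t) \<Rightarrow> a = s *\<^sub>R p + t *\<^sub>R q"
  proof (rule ex1I[of _ "(s,t)"])
    fix z assume "case z of (s, t) \<Rightarrow> a = s *\<^sub>R p + t *\<^sub>R q"
    then obtain s' t' where z: "z = (s', t')" "a = s' *\<^sub>R p + t' *\<^sub>R q" by (cases z) auto
    then have "(s - s') *\<^sub>R p + (t - t') *\<^sub>R q = 0" using assms(2) by (simp add: algebra_simps)
    then show "z = (s,t)" using assms(1) z unfolding li2_def by fastforce
  qed (use assms in auto)
qed (use assms in auto)

lemma gmet_lin: "gmet e (x *\<^sub>R a + y *\<^sub>R b) c = x * gmet e a c + y * gmet e b c"
  by (simp add: gmet_def algebra_simps add_divide_distrib)
lemma gmet_sym: "gmet e a b = gmet e b a"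
  by (simp add: gmet_def algebra_simps)
lemma gmet_lin2: "gmet e c (x *\<^sub>R a + y *\<^sub>R b) = x * gmet e c a + y * gmet e c b"
  using gmet_lin gmet_sym by metis
lemma gmet_diff: "gmet e (a - b) c = gmet e a c - gmet e b c"
  by (simp add: gmet_def algebra_simps diff_divide_distrib)
lemma gmet_pos: assumes "e > 0" "gmet e d d = 0" shows "d = 0"
proof -
  have "d$1 * d$1 + d$2 * d$2 + d$0 * d$0 / e = 0" using assms(2) by (simp add: gmet_def)
  moreover have "d$0 * d$0 / e \<ge> 0" using assms(1) by simp
  moreover have "d$1 * d$1 \<ge> 0" "d$2 * d$2 \<ge> 0" by simp_all
  ultimately have "d$1 * d$1 = 0" "d$2 * d$2 = 0" "d$0 * d$0 / e = 0" by linarith+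
  then have "d$1 = 0 \<and> d$2 = 0 \<and> d$0 = 0" using assms(1) by simp
  then show ?thesis by (simp add: vec3_eq)
qed

lemma sigma_eq:
  assumes "li2 u w" "a = a1 *\<^sub>R u + a2 *\<^sub>R w" "b = b1 *\<^sub>R u + b2 *\<^sub>R w"
  shows "sigma e u w a b = (a1 * b2 - a2 * b1) * sqrt (gmet e u u * gmet e w w - (gmet e u w)\<^sup>2)"
  unfolding sigma_def using coords_eq[OF assms(1,2)] coords_eq[OF assms(1,3)] by simp

lemma basis_change:
  assumes "li2 u w" "a = a1 *\<^sub>R u + a2 *\<^sub>R w" "b = b1 *\<^sub>R u + b2 *\<^sub>R w" "a1 * b2 - a2 * b1 \<noteq> 0"
  shows "li2 a b \<and> (\<forall>v\<in>span {u, w}. \<exists>s t. v = s *\<^sub>R a + t *\<^sub>R b)"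
proof
  have comb: "x *\<^sub>R a + y *\<^sub>R b = (x * a1 + y * b1) *\<^sub>R u + (x * a2 + y * b2) *\<^sub>R w" for x y
    using assms(2,3) by (simp add: algebra_simps)
  show "li2 a b" unfolding li2_def
  proof (intro allI impI)
    fix x y assume "x *\<^sub>R a + y *\<^sub>R b = 0"
    then have "x * a1 + y * b1 = 0" "x * a2 + y * b2 = 0" using assms(1) comb unfolding li2_def by metis+
    moreover have "x * (a1 * b2 - a2 * b1) = (x * a1 + y * b1) * b2 - (x * a2 + y * b2) * b1"
      "y * (a1 * b2 - a2 * b1) = (x * a2 + y * b2) * a1 - (x * a1 + y * b1) * a2"
      by (simp_all add: algebra_simps)
    ultimately have "x * (a1 * b2 - a2 * b1) = 0" "y * (a1 * b2 - a2 * b1) = 0" by simp_all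
    then show "x = 0 \<and> y = 0" using assms(4) by simp
  qed
  show "\<forall>v\<in>span {u, w}. \<exists>s t. v = s *\<^sub>R a + t *\<^sub>R b"
  proof
    fix v assume "v \<in> span {u, w}"
    then obtain s t where v: "v = s *\<^sub>R u + t *\<^sub>R w" using span2 by blast
    let ?d = "a1 * b2 - a2 * b1"
    define x where "x = (s * b2 - t * b1) / ?d"
    define y where "y = (t * a1 - s * a2) / ?d"
    have e1: "(s * b2 - t * b1) * a1 + (t * a1 - s * a2) * b1 = s * ?d"
      "(s * b2 - t * b1) * a2 + (t * a1 - s * a2) * b2 = t * ?d" by (simp_all add: algebra_simps)
    have "x * a1 + y * b1 = ((s * b2 - t * b1) * a1 + (t * a1 - s * a2) * b1) / ?d"
      "x * a2 + y * b2 = ((s * b2 - t * b1) * a2 + (t * a1 - s * a2) * b2) / ?d"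
      unfolding x_def y_def by (simp_all add: add_divide_distrib)
    then have "x * a1 + y * b1 = s" "x * a2 + y * b2 = t" using e1 assms(4) by simp_all
    then have "v = x *\<^sub>R a + y *\<^sub>R b" using comb v by simp
    then show "\<exists>s t. v = s *\<^sub>R a + t *\<^sub>R b" by blast
  qed
qed

lemma Dform: assumes "e \<noteq> 0"
  shows "gmet e u u * gmet e w w - (gmet e u w)^2 = (u$1*w$2 - u$2*w$1)^2 + ((u$2*w$0 - u$0*w$2)^2 + (u$0*w$1 - u$1*w$0)^2)/e"
  using assms unfolding gmet_def by (simp add: field_simps power2_eq_square)
lemma alpha_beta: assumes "e \<noteq> 0"
  shows "(gmet 1 w w * u$0 - gmet 1 u w * w$0) * gmet e u u + (gmet 1 u u * w$0 - gmet 1 u w * u$0) * gmet e u w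
     = u$0 * (gmet e u u * gmet e w w - (gmet e u w)^2)"
   "(gmet 1 w w * u$0 - gmet 1 u w * w$0) * gmet e u w + (gmet 1 u u * w$0 - gmet 1 u w * u$0) * gmet e w w
     = w$0 * (gmet e u u * gmet e w w - (gmet e u w)^2)"
  using assms unfolding gmet_def by (simp_all add: field_simps power2_eq_square)
lemma det_id: "w$0 * (gmet 1 u u * w$0 - gmet 1 u w * u$0) + u$0 * (gmet 1 w w * u$0 - gmet 1 u w * w$0)
   = (u$2*w$0 - u$0*w$2)^2 + (u$0*w$1 - u$1*w$0)^2"
  unfolding gmet_def by (simp add: power2_eq_square algebra_simps)

theorem lemma5p5:
  fixes u w :: "real^3" and \<epsilon> :: real
  assumes "independent {u, w}" and "u \<noteq> w"
    and "span {u, w} \<noteq> distr"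
    and "\<epsilon> > 0"
  shows "\<forall>v\<in>span {u, w}.
     fst (coframe \<epsilon> u w v) = fst (coframe 1 u w v) \<and>
     snd (coframe \<epsilon> u w v) =
       sqrt (1 - (1 - (normg 1 (charX u w))\<^sup>2) * (1 - \<epsilon>)) / sqrt \<epsilon> * snd (coframe 1 u w v)"
proof -
  have li: "li2 u w" using li2_of_indep assms(1,2) .
  define n0 where "n0 = u$1*w$2 - u$2*w$1"
  define n1 where "n1 = u$2*w$0 - u$0*w$2"
  define n2 where "n2 = u$0*w$1 - u$1*w$0"
  define D where "D e = gmet e u u * gmet e w w - (gmet e u w)^2" for e
  have Df: "D e = n0^2 + (n1^2 + n2^2)/e" if "e \<noteq> 0" for e
    unfolding D_def n0_def n1_def n2_def using Dform[OF that] .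
  have nnz: "n0^2 + n1^2 + n2^2 > 0"
  proof (rule ccontr)
    assume "\<not> ?thesis"
    then have "n0^2 = 0" "n1^2 = 0" "n2^2 = 0"
      using zero_le_power2[of n0] zero_le_power2[of n1] zero_le_power2[of n2] by linarith+
    then have z: "n0 = 0" "n1 = 0" "n2 = 0" by simp_all
    have c0: "(w$0) *\<^sub>R u + (- u$0) *\<^sub>R w = 0"
      using z unfolding n0_def n1_def n2_def by (simp add: vec3_eq algebra_simps)
    have a0: "u$0 = 0" using li[unfolded li2_def, rule_format, OF c0] by simp
    have c1: "(w$1) *\<^sub>R u + (- u$1) *\<^sub>R w = 0"
      using z unfolding n0_def n1_def n2_def by (simp add: vec3_eq algebra_simps)
    have a1: "u$1 = 0" using li[unfolded li2_def, rule_format, OF c1] by simp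
    have c2: "(w$2) *\<^sub>R u + (- u$2) *\<^sub>R w = 0"
      using z unfolding n0_def n1_def n2_def by (simp add: vec3_eq algebra_simps)
    have a2: "u$2 = 0" using li[unfolded li2_def, rule_format, OF c2] by simp
    have c3: "(1::real) *\<^sub>R u + 0 *\<^sub>R w = 0" using a0 a1 a2 by (simp add: vec3_eq)
    show False using li[unfolded li2_def, rule_format, OF c3] by simp
  qed
  have Dpos: "D e > 0" if "e > 0" for e
  proof -
    have "n0^2 + (n1^2 + n2^2)/e > 0"
    proof (cases "n1^2 + n2^2 = 0")
      case True then show ?thesis using nnz by simp
    next
      case False
      then have "(n1^2 + n2^2)/e > 0" using that by (simp add: add_pos_nonneg less_le)
      moreover have "n0^2 \<ge> 0" by simp
      ultimately show ?thesis by linarith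
    qed
    then show ?thesis using Df that by simp
  qed
  have D1: "D 1 > 0" using Dpos by simp
  define K where "K = sqrt (D 1)"
  have Kpos: "K > 0" using D1 K_def by simp
  have KK: "K * K = D 1" using D1 unfolding K_def by simp
  have sigD: "sqrt (gmet e u u * gmet e w w - (gmet e u w)\<^sup>2) = sqrt (D e)" for e
    unfolding D_def ..
  have us: "u \<in> span {u,w}" "w \<in> span {u,w}" by (simp_all add: span_base)
  have uu: "u = 1 *\<^sub>R u + 0 *\<^sub>R w" and ww: "w = 0 *\<^sub>R u + 1 *\<^sub>R w" by simp_all
  define X where "X = (w$0 / K) *\<^sub>R u + (- u$0 / K) *\<^sub>R w"
  have Xspan: "X \<in> span {u,w}" unfolding X_def span2 by blast
  have sigX: "sigma e u w X b = (w$0 * b2 + u$0 * b1) * sqrt (D e) / K"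
    if "b = b1 *\<^sub>R u + b2 *\<^sub>R w" for b b1 b2 e
  proof -
    have "sigma e u w X b = (w$0/K * b2 - (-u$0/K) * b1) * sqrt (D e)"
      using sigma_eq[OF li X_def that] unfolding sigD .
    also have "\<dots> = (w$0 * b2 + u$0 * b1) * sqrt (D e) / K" using Kpos by (simp add: field_simps)
    finally show ?thesis .
  qed
  have sigX1: "sigma 1 u w X b = omega b" if bs: "b \<in> span {u,w}" for b
  proof -
    obtain b1 b2 where b: "b = b1 *\<^sub>R u + b2 *\<^sub>R w" using bs span2 by blast
    have "sigma 1 u w X b = (w$0 * b2 + u$0 * b1) * K / K" using sigX[OF b] unfolding K_def .
    also have "\<dots> = omega b" unfolding b omega_def using Kpos by (simp add: field_simps)
    finally show ?thesis .
  qed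
  have charX: "charX u w = X"
    unfolding charX_def
  proof (rule the1_equality)
    show "\<exists>!x. x \<in> span {u,w} \<and> (\<forall>b\<in>span {u,w}. sigma 1 u w x b = omega b)"
    proof (rule ex1I[of _ X])
      show "X \<in> span {u,w} \<and> (\<forall>b\<in>span {u,w}. sigma 1 u w X b = omega b)" using Xspan sigX1 by blast
    next
      fix x assume h: "x \<in> span {u,w} \<and> (\<forall>b\<in>span {u,w}. sigma 1 u w x b = omega b)"
      then obtain x1 x2 where x: "x = x1 *\<^sub>R u + x2 *\<^sub>R w" using span2 by blast
      have e1: "sigma 1 u w x u = omega u" "sigma 1 u w x w = omega w" using h us by blast+
      have e2: "sigma 1 u w x u = (x1 * 0 - x2 * 1) * K" using sigma_eq[OF li x uu] unfolding sigD K_def .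
      have e3: "sigma 1 u w x w = (x1 * 1 - x2 * 0) * K" using sigma_eq[OF li x ww] unfolding sigD K_def .
      have "x2 = - u$0 / K" "x1 = w$0 / K" using e1 e2 e3 Kpos unfolding omega_def by (simp_all add: field_simps)
      then show "x = X" unfolding x X_def by simp
    qed
  qed (use Xspan sigX1 in blast)
  define \<alpha> where "\<alpha> = gmet 1 w w * u$0 - gmet 1 u w * w$0"
  define \<beta> where "\<beta> = gmet 1 u u * w$0 - gmet 1 u w * u$0"
  define M where "M = \<alpha> *\<^sub>R u + \<beta> *\<^sub>R w"
  define c where "c e = (1 / (sqrt (D e) * K)) *\<^sub>R M" for e
  have Jrot: "Jrot e u w X = c e" if "e > 0" for e
  proof -
    have De: "D e > 0" using Dpos that .
    define sD where "sD = sqrt (D e)"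
    have sDpos: "sD > 0" using De sD_def by simp
    have sDsq: "sD * sD = D e" using De sD_def by simp
    have cform: "c e = (\<alpha> / (sD * K)) *\<^sub>R u + (\<beta> / (sD * K)) *\<^sub>R w"
      unfolding c_def M_def sD_def by (simp add: scaleR_add_right)
    have ab: "\<alpha> * gmet e u u + \<beta> * gmet e u w = u$0 * D e"
      "\<alpha> * gmet e u w + \<beta> * gmet e w w = w$0 * D e"
      unfolding \<alpha>_def \<beta>_def D_def using alpha_beta that by auto
    have gu: "gmet e (c e) u = u$0 * sD / K"
    proof -
      have "gmet e (c e) u = (\<alpha> * gmet e u u + \<beta> * gmet e u w) / (sD * K)"
        unfolding cform gmet_lin by (simp add: gmet_sym[of e w u] add_divide_distrib)
      also have "\<dots> = u$0 * (sD * sD) / (sD * K)" using ab sDsq by simp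
      also have "\<dots> = u$0 * sD / K" using sDpos by simp
      finally show ?thesis .
    qed
    have gw: "gmet e (c e) w = w$0 * sD / K"
    proof -
      have "gmet e (c e) w = (\<alpha> * gmet e u w + \<beta> * gmet e w w) / (sD * K)"
        unfolding cform gmet_lin by (simp add: add_divide_distrib)
      also have "\<dots> = w$0 * (sD * sD) / (sD * K)" using ab sDsq by simp
      also have "\<dots> = w$0 * sD / K" using sDpos by simp
      finally show ?thesis .
    qed
    have cspan: "c e \<in> span {u,w}" unfolding cform span2 by blast
    have cprop: "gmet e (c e) b = sigma e u w X b" if bs: "b \<in> span {u,w}" for b
    proof -
      obtain b1 b2 where b: "b = b1 *\<^sub>R u + b2 *\<^sub>R w" using bs span2 by blast
      have "gmet e (c e) b = b1 * (u$0 * sD / K) + b2 * (w$0 * sD / K)"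
        unfolding b gmet_lin2 gu gw ..
      also have "\<dots> = sigma e u w X b" unfolding sigX[OF b] sD_def using Kpos by (simp add: field_simps)
      finally show ?thesis .
    qed
    show ?thesis unfolding Jrot_def
    proof (rule the1_equality)
      show "\<exists>!x. x \<in> span {u,w} \<and> (\<forall>b\<in>span {u,w}. gmet e x b = sigma e u w X b)"
      proof (rule ex1I[of _ "c e"])
        show "c e \<in> span {u,w} \<and> (\<forall>b\<in>span {u,w}. gmet e (c e) b = sigma e u w X b)"
          using cspan cprop by blast
      next
        fix x assume h: "x \<in> span {u,w} \<and> (\<forall>b\<in>span {u,w}. gmet e x b = sigma e u w X b)"
        define d where "d = x - c e"
        have dspan: "d \<in> span {u,w}" unfolding d_def using h cspan by (simp add: span_diff)
        have "gmet e d d = gmet e x d - gmet e (c e) d" unfolding d_def gmet_diff ..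
        also have "\<dots> = 0" using h cprop[OF dspan] dspan by simp
        finally have "d = 0" using gmet_pos that by blast
        then show "x = c e" unfolding d_def by simp
      qed
    qed (use cspan cprop in blast)
  qed
  have X0: "X$0 = 0" unfolding X_def by (simp add: field_simps)
  have normX: "normg e X = normg 1 X" for e unfolding normg_def gmet_def using X0 by simp
  define N where "N = normg 1 X"
  have gXX: "gmet 1 X X = (n1^2 + n2^2) / D 1"
    unfolding gmet_def X_def n1_def n2_def KK[symmetric] using Kpos
    by (simp add: field_simps power2_eq_square)
  have u0w0: "\<not> (u$0 = 0 \<and> w$0 = 0)"
  proof
    assume z: "u$0 = 0 \<and> w$0 = 0"
    then have "n1 = 0" "n2 = 0" unfolding n1_def n2_def by simp_all
    then have n0nz: "n0 \<noteq> 0" using nnz by auto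
    have "span {u,w} = distr"
    proof
      show "span {u,w} \<subseteq> distr"
      proof
        fix v assume "v \<in> span {u,w}"
        then obtain s t where "v = s *\<^sub>R u + t *\<^sub>R w" using span2 by blast
        then show "v \<in> distr" using z unfolding distr_def omega_def by simp
      qed
      show "distr \<subseteq> span {u,w}"
      proof
        fix v assume "v \<in> distr"
        then have v0: "v$0 = 0" unfolding distr_def omega_def by simp
        have q1: "(v$1 * w$2 - v$2 * w$1) * u$1 + (u$1 * v$2 - u$2 * v$1) * w$1 = v$1 * n0"
          "(v$1 * w$2 - v$2 * w$1) * u$2 + (u$1 * v$2 - u$2 * v$1) * w$2 = v$2 * n0"
          unfolding n0_def by (simp_all add: algebra_simps)
        have q2: "A * p / n0 + B * q / n0 = (A * p + B * q) / n0" for A B p q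
          by (simp add: add_divide_distrib)
        have "v = ((v$1 * w$2 - v$2 * w$1) / n0) *\<^sub>R u + ((u$1 * v$2 - u$2 * v$1) / n0) *\<^sub>R w"
          unfolding vec3_eq using v0 z n0nz by (simp add: q2 q1)
        then show "v \<in> span {u,w}" unfolding span2 by blast
      qed
    qed
    then show False using assms(3) by simp
  qed
  have Xnz: "X \<noteq> 0"
  proof
    assume "X = 0"
    then have "w$0 / K = 0 \<and> - u$0 / K = 0" using li[unfolded li2_def, rule_format, of "w$0 / K" "- u$0 / K"] unfolding X_def by blast
    then show False using u0w0 Kpos by simp
  qed
  have gXXpos: "gmet 1 X X > 0"
  proof -
    have "gmet 1 X X \<ge> 0" unfolding gmet_def by simp
    moreover have "gmet 1 X X \<noteq> 0" using gmet_pos[of 1 X] Xnz by auto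
    ultimately show ?thesis by simp
  qed
  have Npos: "N > 0" unfolding N_def normg_def using gXXpos by simp
  have NN: "N^2 = (n1^2 + n2^2) / D 1" unfolding N_def normg_def using gXXpos gXX by simp
  have n12pos: "n1^2 + n2^2 > 0" using gXXpos gXX D1 by (simp add: zero_less_divide_iff)
  define f1 where "f1 = frame1 1 u w"
  define f2 where "f2 = frame2 1 u w"
  have fr1: "frame1 \<epsilon> u w = f1" unfolding f1_def frame1_def charX normX[of \<epsilon>] ..
  have c1: "c 1 = (1 / (K * K)) *\<^sub>R M" unfolding c_def K_def ..
  have cE0: "c \<epsilon> = (K / sqrt (D \<epsilon>)) *\<^sub>R ((1 / (K * K)) *\<^sub>R M)"
    unfolding c_def using Kpos by (simp add: field_simps)
  have cE: "c \<epsilon> = (K / sqrt (D \<epsilon>)) *\<^sub>R c 1" unfolding cE0 c1 ..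
  have fr2: "frame2 \<epsilon> u w = (K / sqrt (D \<epsilon>)) *\<^sub>R f2"
    unfolding f2_def frame2_def charX normX[of \<epsilon>] Jrot[OF assms(4)] Jrot[of 1, simplified] cE by simp
  have f1N: "f1 = (1 / N) *\<^sub>R X" unfolding f1_def frame1_def charX N_def ..
  have f1form: "f1 = (w$0 / K / N) *\<^sub>R u + (- u$0 / K / N) *\<^sub>R w"
    unfolding f1N X_def by (simp add: scaleR_add_right scaleR_diff_right mult.commute)
  have f2form: "f2 = (\<alpha> / (K * K) / N) *\<^sub>R u + (\<beta> / (K * K) / N) *\<^sub>R w"
  proof -
    have "f2 = (1 / N) *\<^sub>R c 1" unfolding f2_def frame2_def charX N_def Jrot[of 1, simplified] ..
    then show ?thesis unfolding c1 M_def by (simp add: scaleR_add_right mult.commute)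
  qed
  have detid: "w$0 * \<beta> + u$0 * \<alpha> = n1^2 + n2^2"
    unfolding \<alpha>_def \<beta>_def n1_def n2_def using det_id by simp
  have "(w$0 / K / N) * (\<beta> / (K * K) / N) - (- u$0 / K / N) * (\<alpha> / (K * K) / N)
      = (w$0 * \<beta> + u$0 * \<alpha>) / (K * K * K * N * N)"
    using Kpos Npos by (simp add: field_simps)
  also have "\<dots> \<noteq> 0" unfolding detid using n12pos Kpos Npos by (simp del: sum_power2_eq_zero_iff)
  finally have bc: "li2 f1 f2 \<and> (\<forall>v\<in>span {u, w}. \<exists>s t. v = s *\<^sub>R f1 + t *\<^sub>R f2)"
    using basis_change[OF li f1form f2form] by blast
  define r where "r = K / sqrt (D \<epsilon>)"
  have DE: "D \<epsilon> > 0" using Dpos assms(4) .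
  have rpos: "r > 0" unfolding r_def using Kpos DE by simp
  have li': "li2 f1 (r *\<^sub>R f2)" unfolding li2_def
  proof (intro allI impI)
    fix x y assume "x *\<^sub>R f1 + y *\<^sub>R r *\<^sub>R f2 = 0"
    then have "x *\<^sub>R f1 + (y * r) *\<^sub>R f2 = 0" by simp
    then have "x = 0 \<and> y * r = 0" using bc unfolding li2_def by blast
    then show "x = 0 \<and> y = 0" using rpos by simp
  qed
  have lam: "sqrt (1 - (1 - N\<^sup>2) * (1 - \<epsilon>)) / sqrt \<epsilon> = 1 / r"
  proof -
    have D1f: "D 1 = n0^2 + n1^2 + n2^2" using Df[of 1] by simp
    have DEf: "D \<epsilon> = n0^2 + (n1^2 + n2^2) / \<epsilon>" using Df assms(4) by simp
    have "(1 - (1 - N\<^sup>2) * (1 - \<epsilon>)) / \<epsilon> = D \<epsilon> / D 1"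
      unfolding NN DEf D1f using assms(4) nnz by (simp add: field_simps)
    then have "sqrt (1 - (1 - N\<^sup>2) * (1 - \<epsilon>)) / sqrt \<epsilon> = sqrt (D \<epsilon>) / K"
      unfolding K_def by (metis real_sqrt_divide)
    then show ?thesis unfolding r_def by simp
  qed
  show ?thesis
  proof
    fix v assume "v \<in> span {u, w}"
    then obtain s t where v: "v = s *\<^sub>R f1 + t *\<^sub>R f2" using bc by blast
    have co1: "coframe 1 u w v = (s, t)"
      unfolding coframe_def f1_def[symmetric] f2_def[symmetric] using coords_eq[OF _ v] bc by blast
    have v': "v = s *\<^sub>R f1 + (t / r) *\<^sub>R (r *\<^sub>R f2)" using v rpos by simp
    have coE: "coframe \<epsilon> u w v = (s, t / r)"
      unfolding coframe_def fr1 fr2 r_def[symmetric] using coords_eq[OF li' v'] .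
    show "fst (coframe \<epsilon> u w v) = fst (coframe 1 u w v) \<and>
       snd (coframe \<epsilon> u w v) =
       sqrt (1 - (1 - (normg 1 (charX u w))\<^sup>2) * (1 - \<epsilon>)) / sqrt \<epsilon> * snd (coframe 1 u w v)"
      unfolding co1 coE charX N_def[symmetric] lam by simp
  qed
qed

end
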